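(* Let $(\mathbf F,\prec)$ be an IS-family over a finite set $V$. For every integer $x\ge0$, $M(x)\le 2^x|sm(\mathbf F)|$.
   Context: Let $V$ be a finite set, $n=|V|$, $\mathbf F$ a family of subsets of $V$ and $\prec$ a strict partial order on $\mathbf F$; $S\preceq S'$ means $S\prec S'$ or $S=S'$. For $S\in\mathbf F$ and $v\in V$, $S$ covers $v$ if there is $S'\in\mathbf F$ with $S'\prec S$ and $v\in S'\setminus S$. $Pred(S)$ is the set of $S'\in\mathbf F$ with $S'\prec S$ such that there is no $S''\in\mathbf F$ with $S'\prec S''\prec S$. The visible set $Vis(S)$ is the set of $v\in V$ such that $v\in S'$ for some $S'\in Pred(S)$ and $v$ is not covered by any element of $Pred(S)$. For $S\in\mathbf F$ and $v\in S$, a witness of $v$ w.r.t. $S$ is a $\prec$-minimal element $S'\in\mathbf F$ with $S\prec S'$ and $v\in S\setminus S'$. $(\mathbf F,\prec)$ is an IS-family if: (SE) there is a unique element $sm(\mathbf F)\in\mathbf F$ with $sm(\mathbf F)\prec S$ for every other $S\in\mathbf F$; (SM) $S_1\prec S_2$ implies $|S_1|<|S_2|$; (SW) for every $S\in\mathbf F$ and $v\in S$ there is at most one witness of $v$ w.r.t. $S$; (TE) if $S_1\prec S_2\prec S_3$ are in $\mathbf F$ and $v\in S_1\setminus S_2$ then $v\in S_1\setminus S_3$; (LVS) for every $S\in\mathbf F$ and $S'\in Pred(S)$, $|S'|\le |Vis(S)|$; (DVS) for every $S\in\mathbf F$ with $S\ne sm(\mathbf F)$, $Vis(S)$ is not a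 subset of $S$; (EC) $sm(\mathbf F)$ can be computed in $O(n^3)$ time, for given $S\in\mathbf F$ and $v\in S$ the witness of $v$ w.r.t. $S$ can be computed (or its nonexistence reported) in $O(n^3)$ time, and $S_1\prec S_2$ can be tested in $O(|S_1|)$ time. Notation: $hat(S)=S\setminus\bigcup_{S'\prec S}S'$; $ex(S)=|S|-|sm(\mathbf F)|$; for $x\ge0$, $\mathbf E_x=\{S\in\mathbf F: ex(S)\le x\}$; for $S\in\mathbf E_x$, $hat_x(S)$ is the set of $v\in hat(S)$ such that there is no $S'\in\mathbf E_x$ with $S\prec S'$ and $v\in S\setminus S'$; $M(x)=\sum_{S\in\mathbf E_x}2^{x-ex(S)}|hat_x(S)|$. *)

theory Defs
  imports Main
begin

definition strict_po_on :: "'a set set \<Rightarrow> ('a set \<Rightarrow> 'a set \<Rightarrow> bool) \<Rightarrow> bool" where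
  "strict_po_on F lt \<longleftrightarrow>
     (\<forall>S\<in>F. \<not> lt S S) \<and>
     (\<forall>S1\<in>F. \<forall>S2\<in>F. \<forall>S3\<in>F. lt S1 S2 \<longrightarrow> lt S2 S3 \<longrightarrow> lt S1 S3)"

definition covers :: "'a set set \<Rightarrow> ('a set \<Rightarrow> 'a set \<Rightarrow> bool) \<Rightarrow> 'a set \<Rightarrow> 'a \<Rightarrow> bool" where
  "covers F lt S v \<longleftrightarrow> (\<exists>S'\<in>F. lt S' S \<and> v \<in> S' - S)"

definition Pred :: "'a set set \<Rightarrow> ('a set \<Rightarrow> 'a set \<Rightarrow> bool) \<Rightarrow> 'a set \<Rightarrow> 'a set set" where
  "Pred F lt S = {S'\<in>F. lt S' S \<and> \<not> (\<exists>S''\<in>F. lt S' S'' \<and> lt S'' S)}"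

definition Vis :: "'a set \<Rightarrow> 'a set set \<Rightarrow> ('a set \<Rightarrow> 'a set \<Rightarrow> bool) \<Rightarrow> 'a set \<Rightarrow> 'a set" where
  "Vis V F lt S = {v\<in>V. (\<exists>S'\<in>Pred F lt S. v \<in> S') \<and> \<not> (\<exists>S'\<in>Pred F lt S. covers F lt S' v)}"

definition is_witness :: "'a set set \<Rightarrow> ('a set \<Rightarrow> 'a set \<Rightarrow> bool) \<Rightarrow> 'a set \<Rightarrow> 'a \<Rightarrow> 'a set \<Rightarrow> bool" where
  "is_witness F lt S v S' \<longleftrightarrow>
     S' \<in> F \<and> lt S S' \<and> v \<in> S - S' \<and>
     \<not> (\<exists>T\<in>F. lt S T \<and> v \<in> S - T \<and> lt T S')"

definition sm :: "'a set set \<Rightarrow> ('a set \<Rightarrow> 'a set \<Rightarrow> bool) \<Rightarrow> 'a set" where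
  "sm F lt = (THE s. s \<in> F \<and> (\<forall>S\<in>F. S \<noteq> s \<longrightarrow> lt s S))"

definition IS_family :: "'a set \<Rightarrow> 'a set set \<Rightarrow> ('a set \<Rightarrow> 'a set \<Rightarrow> bool) \<Rightarrow> bool" where
  "IS_family V F lt \<longleftrightarrow>
     finite V \<and> (\<forall>S\<in>F. S \<subseteq> V) \<and> strict_po_on F lt \<and>
     \<comment> \<open>(SE)\<close>
     (\<exists>!s. s \<in> F \<and> (\<forall>S\<in>F. S \<noteq> s \<longrightarrow> lt s S)) \<and>
     \<comment> \<open>(SM)\<close>
     (\<forall>S1\<in>F. \<forall>S2\<in>F. lt S1 S2 \<longrightarrow> card S1 < card S2) \<and>
     \<comment> \<open>(SW)\<close>
     (\<forall>S\<in>F. \<forall>v\<in>S. \<forall>W1 W2. is_witness F lt S v W1 \<longrightarrow> is_witness F lt S v W2 \<longrightarrow> W1 = W2) \<and>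
     \<comment> \<open>(TE)\<close>
     (\<forall>S1\<in>F. \<forall>S2\<in>F. \<forall>S3\<in>F. \<forall>v. lt S1 S2 \<longrightarrow> lt S2 S3 \<longrightarrow> v \<in> S1 - S2 \<longrightarrow> v \<in> S1 - S3) \<and>
     \<comment> \<open>(LVS)\<close>
     (\<forall>S\<in>F. \<forall>S'\<in>Pred F lt S. card S' \<le> card (Vis V F lt S)) \<and>
     \<comment> \<open>(DVS)\<close>
     (\<forall>S\<in>F. S \<noteq> sm F lt \<longrightarrow> \<not> Vis V F lt S \<subseteq> S)"

definition hat :: "'a set set \<Rightarrow> ('a set \<Rightarrow> 'a set \<Rightarrow> bool) \<Rightarrow> 'a set \<Rightarrow> 'a set" where
  "hat F lt S = S - \<Union>{S'\<in>F. lt S' S}"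

definition ex :: "'a set set \<Rightarrow> ('a set \<Rightarrow> 'a set \<Rightarrow> bool) \<Rightarrow> 'a set \<Rightarrow> nat" where
  "ex F lt S = card S - card (sm F lt)"

definition E :: "'a set set \<Rightarrow> ('a set \<Rightarrow> 'a set \<Rightarrow> bool) \<Rightarrow> nat \<Rightarrow> 'a set set" where
  "E F lt x = {S\<in>F. ex F lt S \<le> x}"

definition hat_x :: "'a set set \<Rightarrow> ('a set \<Rightarrow> 'a set \<Rightarrow> bool) \<Rightarrow> nat \<Rightarrow> 'a set \<Rightarrow> 'a set" where
  "hat_x F lt x S = {v\<in>hat F lt S. \<not> (\<exists>S'\<in>E F lt x. lt S S' \<and> v \<in> S - S')}"

definition M :: "'a set set \<Rightarrow> ('a set \<Rightarrow> 'a set \<Rightarrow> bool) \<Rightarrow> nat \<Rightarrow> nat" where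
  "M F lt x = (\<Sum>S\<in>E F lt x. 2 ^ (x - ex F lt S) * card (hat_x F lt x S))"

end

theory Submission
  imports Defs
begin

context
  fixes V :: "'a set" and F :: "'a set set" and lt :: "'a set \<Rightarrow> 'a set \<Rightarrow> bool"
  assumes IS: "IS_family V F lt"
begin

lemma finV: "finite V" using IS unfolding IS_family_def by (elim conjE) assumption
lemma subV': "\<forall>S\<in>F. S \<subseteq> V" using IS unfolding IS_family_def by (elim conjE) assumption
lemma subV: "S \<in> F \<Longrightarrow> S \<subseteq> V" using subV' by blast
lemma finS: "S \<in> F \<Longrightarrow> finite S" using subV finV finite_subset by blast
lemma finF: "finite F"
proof -
  have "F \<subseteq> Pow V" using subV by auto
  thus ?thesis using finV finite_subset by blast
qed
lemma spo: "strict_po_on F lt" using IS unfolding IS_family_def by (elim conjE) assumption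
lemma irr: "S \<in> F \<Longrightarrow> \<not> lt S S" using spo unfolding strict_po_on_def by blast
lemma trn: "S1 \<in> F \<Longrightarrow> S2 \<in> F \<Longrightarrow> S3 \<in> F \<Longrightarrow> lt S1 S2 \<Longrightarrow> lt S2 S3 \<Longrightarrow> lt S1 S3"
proof -
  have h: "\<forall>S1\<in>F. \<forall>S2\<in>F. \<forall>S3\<in>F. lt S1 S2 \<longrightarrow> lt S2 S3 \<longrightarrow> lt S1 S3"
    using spo unfolding strict_po_on_def by (elim conjE) assumption
  show "S1 \<in> F \<Longrightarrow> S2 \<in> F \<Longrightarrow> S3 \<in> F \<Longrightarrow> lt S1 S2 \<Longrightarrow> lt S2 S3 \<Longrightarrow> lt S1 S3"
    using h by blast
qed
lemma SM': "\<forall>S1\<in>F. \<forall>S2\<in>F. lt S1 S2 \<longrightarrow> card S1 < card S2"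
  using IS unfolding IS_family_def by (elim conjE) assumption
lemma SM: "S1 \<in> F \<Longrightarrow> S2 \<in> F \<Longrightarrow> lt S1 S2 \<Longrightarrow> card S1 < card S2"
  using SM' by blast
lemma SW': "\<forall>S\<in>F. \<forall>v\<in>S. \<forall>W1 W2. is_witness F lt S v W1 \<longrightarrow> is_witness F lt S v W2 \<longrightarrow> W1 = W2"
  using IS unfolding IS_family_def by (elim conjE) assumption
lemma SW: "S \<in> F \<Longrightarrow> v \<in> S \<Longrightarrow> is_witness F lt S v W1 \<Longrightarrow> is_witness F lt S v W2 \<Longrightarrow> W1 = W2"
  using SW' by blast
lemma TE': "\<forall>S1\<in>F. \<forall>S2\<in>F. \<forall>S3\<in>F. \<forall>v. lt S1 S2 \<longrightarrow> lt S2 S3 \<longrightarrow> v \<in> S1 - S2 \<longrightarrow> v \<in> S1 - S3"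
  using IS unfolding IS_family_def by (elim conjE) assumption
lemma TE: "S1 \<in> F \<Longrightarrow> S2 \<in> F \<Longrightarrow> S3 \<in> F \<Longrightarrow> lt S1 S2 \<Longrightarrow> lt S2 S3 \<Longrightarrow> v \<in> S1 - S2 \<Longrightarrow> v \<in> S1 - S3"
  using TE' by blast
lemma LVS': "\<forall>S\<in>F. \<forall>S'\<in>Pred F lt S. card S' \<le> card (Vis V F lt S)"
  using IS unfolding IS_family_def by (elim conjE) assumption
lemma LVS: "S \<in> F \<Longrightarrow> S' \<in> Pred F lt S \<Longrightarrow> card S' \<le> card (Vis V F lt S)"
  using LVS' by blast
lemma DVS': "\<forall>S\<in>F. S \<noteq> sm F lt \<longrightarrow> \<not> Vis V F lt S \<subseteq> S"
  using IS unfolding IS_family_def by (elim conjE) assumption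
lemma DVS: "S \<in> F \<Longrightarrow> S \<noteq> sm F lt \<Longrightarrow> \<not> Vis V F lt S \<subseteq> S"
  using DVS' by blast

lemma sm_prop: "sm F lt \<in> F \<and> (\<forall>S\<in>F. S \<noteq> sm F lt \<longrightarrow> lt (sm F lt) S)"
proof -
  have "\<exists>!s. s \<in> F \<and> (\<forall>S\<in>F. S \<noteq> s \<longrightarrow> lt s S)" using IS unfolding IS_family_def by (elim conjE) assumption
  thus ?thesis unfolding sm_def by (rule theI')
qed
lemma sm_in: "sm F lt \<in> F" using sm_prop by blast
lemma sm_lt: "S \<in> F \<Longrightarrow> S \<noteq> sm F lt \<Longrightarrow> lt (sm F lt) S" using sm_prop by blast
lemma card_sm: "S \<in> F \<Longrightarrow> card (sm F lt) \<le> card S"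
  using sm_lt[of S] SM[OF sm_in, of S] by (cases "S = sm F lt") auto

lemma E0: "E F lt 0 = {sm F lt}"
proof -
  have "S = sm F lt" if "S \<in> F" "card S \<le> card (sm F lt)" for S
    using that sm_lt[of S] SM[OF sm_in that(1)] by fastforce
  thus ?thesis unfolding E_def ex_def using sm_in by auto
qed

lemma M0: "M F lt 0 = card (sm F lt)"
proof -
  have h: "hat F lt (sm F lt) = sm F lt"
  proof -
    have "\<not> lt S' (sm F lt)" if "S' \<in> F" for S'
      using that sm_lt[of S'] trn[OF sm_in that sm_in] irr[OF sm_in] irr[OF that] by blast
    thus ?thesis unfolding hat_def by auto
  qed
  have "hat_x F lt 0 (sm F lt) = sm F lt"
    unfolding hat_x_def h E0 using irr[OF sm_in] by auto
  thus ?thesis unfolding M_def E0 ex_def by simp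
qed

lemma ex_max_card: "finite K \<Longrightarrow> K \<noteq> {} \<Longrightarrow> \<exists>P\<in>K. \<forall>Q\<in>K. card Q \<le> (card P::nat)"
proof -
  assume "finite K" "K \<noteq> {}"
  hence "Max (card ` K) \<in> card ` K" by simp
  then obtain P where "P \<in> K" "card P = Max (card ` K)" by auto
  thus ?thesis using \<open>finite K\<close> by (metis Max_ge finite_imageI imageI)
qed

lemma ex_min_card: "finite K \<Longrightarrow> K \<noteq> {} \<Longrightarrow> \<exists>P\<in>K. \<forall>Q\<in>K. card P \<le> (card Q::nat)"
proof -
  assume "finite K" "K \<noteq> {}"
  hence "Min (card ` K) \<in> card ` K" by simp
  then obtain P where "P \<in> K" "card P = Min (card ` K)" by auto
  thus ?thesis using \<open>finite K\<close> by (metis Min_le finite_imageI imageI)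
qed

lemma pred_above:
  assumes A: "A \<in> F" and T: "T \<in> F" and lAT: "lt A T"
  shows "\<exists>P\<in>Pred F lt T. P = A \<or> lt A P"
proof -
  let ?K = "{P\<in>F. (P = A \<or> lt A P) \<and> lt P T}"
  have "finite ?K" using finF by simp
  moreover have "A \<in> ?K" using A lAT by simp
  ultimately obtain P where P: "P \<in> ?K" and mx: "\<forall>Q\<in>?K. card Q \<le> card P"
    using ex_max_card[of ?K] by blast
  have "P \<in> Pred F lt T"
  proof -
    have "\<not> (\<exists>S''\<in>F. lt P S'' \<and> lt S'' T)"
    proof
      assume "\<exists>S''\<in>F. lt P S'' \<and> lt S'' T"
      then obtain S'' where S'': "S'' \<in> F" "lt P S''" "lt S'' T" by blast
      have "S'' \<in> ?K" using P S'' trn[OF A, of P S''] by auto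
      hence "card S'' \<le> card P" using mx by blast
      moreover have "card P < card S''" using SM P S'' by blast
      ultimately show False by simp
    qed
    thus ?thesis using P unfolding Pred_def by blast
  qed
  thus ?thesis using P by blast
qed

lemma vis_pair:
  assumes T: "T \<in> F" and vV: "v \<in> Vis V F lt T" and vT: "v \<notin> T"
    and S': "S' \<in> Pred F lt T" and vS': "v \<in> S'"
  shows "\<exists>S. (S = S' \<or> lt S S') \<and> S \<in> F \<and> v \<in> hat F lt S \<and> is_witness F lt S v T"
proof -
  have S'F: "S' \<in> F" and S'T: "lt S' T" using S' unfolding Pred_def by auto
  let ?K = "{S\<in>F. (S = S' \<or> lt S S') \<and> v \<in> S}"
  have "finite ?K" using finF by simp
  moreover have "S' \<in> ?K" using S'F vS' by simp
  ultimately obtain S where S: "S \<in> ?K" and mn: "\<forall>Q\<in>?K. card S \<le> card Q"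
    using ex_min_card[of ?K] by blast
  have SF: "S \<in> F" and vS: "v \<in> S" using S by auto
  have ST: "lt S T" using S S'T trn[OF SF S'F T] by auto
  have hat: "v \<in> hat F lt S"
  proof -
    have "v \<notin> S''" if "S'' \<in> F" "lt S'' S" for S''
    proof
      assume "v \<in> S''"
      have "S'' \<in> ?K" using that \<open>v \<in> S''\<close> S trn[OF that(1) SF S'F] by auto
      hence "card S \<le> card S''" using mn by blast
      moreover have "card S'' < card S" using SM that SF by blast
      ultimately show False by simp
    qed
    thus ?thesis unfolding hat_def using vS by blast
  qed
  have nocov: "\<not> covers F lt P v" if "P \<in> Pred F lt T" for P
    using vV that unfolding Vis_def by blast
  have wit: "is_witness F lt S v T"
    unfolding is_witness_def
  proof (intro conjI)
    show "\<not> (\<exists>Tm\<in>F. lt S Tm \<and> v \<in> S - Tm \<and> lt Tm T)"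
    proof
      assume "\<exists>Tm\<in>F. lt S Tm \<and> v \<in> S - Tm \<and> lt Tm T"
      then obtain Tm where Tm: "Tm \<in> F" "lt S Tm" "v \<in> S - Tm" "lt Tm T" by blast
      obtain W where W: "W \<in> Pred F lt T" "W = Tm \<or> lt Tm W" using pred_above[OF Tm(1) T Tm(4)] by blast
      have WF: "W \<in> F" using W unfolding Pred_def by auto
      have "lt S W \<and> v \<in> S - W"
      proof (cases "W = Tm")
        case True thus ?thesis using Tm by simp
      next
        case False
        hence "lt Tm W" using W by simp
        thus ?thesis using TE[OF SF Tm(1) WF Tm(2) _ Tm(3)] trn[OF SF Tm(1) WF Tm(2)] by blast
      qed
      hence "covers F lt W v" unfolding covers_def using SF by blast
      thus False using nocov W by blast
    qed
  qed (use T ST vS vT in auto)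
  show ?thesis using S hat wit by blast
qed

lemma Q_sub:
  assumes T: "T \<in> F" and exT: "ex F lt T = Suc x" and SF: "S \<in> F"
    and vh: "v \<in> hat F lt S" and w: "is_witness F lt S v T"
  shows "S \<in> E F lt x \<and> v \<in> hat_x F lt x S \<and> v \<notin> hat_x F lt (Suc x) S"
proof -
  have ST: "lt S T" and vS: "v \<in> S" and vT: "v \<notin> T" using w unfolding is_witness_def by auto
  have "card S < card T" using SM SF T ST by blast
  hence exS: "ex F lt S < Suc x" using exT card_sm[OF SF] unfolding ex_def by linarith
  hence SE: "S \<in> E F lt x" unfolding E_def using SF by auto
  have TE1: "T \<in> E F lt (Suc x)" using T exT unfolding E_def by auto
  have notin: "v \<notin> hat_x F lt (Suc x) S" unfolding hat_x_def using TE1 ST vS vT by blast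
  have "v \<in> hat_x F lt x S"
  proof -
    have "\<not> (\<exists>S'\<in>E F lt x. lt S S' \<and> v \<in> S - S')"
    proof
      assume "\<exists>S'\<in>E F lt x. lt S S' \<and> v \<in> S - S'"
      then obtain S' where S': "S' \<in> E F lt x" "lt S S'" "v \<in> S - S'" by blast
      have S'F: "S' \<in> F" using S' unfolding E_def by auto
      let ?K = "{W\<in>F. lt S W \<and> v \<in> S - W \<and> (W = S' \<or> lt W S')}"
      have "finite ?K" using finF by simp
      moreover have "S' \<in> ?K" using S' S'F by simp
      ultimately obtain W where W: "W \<in> ?K" and mn: "\<forall>Q\<in>?K. card W \<le> card Q"
        using ex_min_card[of ?K] by blast
      have WF: "W \<in> F" using W by auto
      have wW: "is_witness F lt S v W"
        unfolding is_witness_def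
      proof (intro conjI)
        show "\<not> (\<exists>Tm\<in>F. lt S Tm \<and> v \<in> S - Tm \<and> lt Tm W)"
        proof
          assume "\<exists>Tm\<in>F. lt S Tm \<and> v \<in> S - Tm \<and> lt Tm W"
          then obtain Tm where Tm: "Tm \<in> F" "lt S Tm" "v \<in> S - Tm" "lt Tm W" by blast
          have "Tm \<in> ?K" using Tm W trn[OF Tm(1) WF S'F] by auto
          hence "card W \<le> card Tm" using mn by blast
          moreover have "card Tm < card W" using SM Tm WF by blast
          ultimately show False by simp
        qed
      qed (use W in auto)
      have "W = T" using SW[OF SF vS wW w] .
      moreover have "card W \<le> card S'" using W SM[OF WF S'F] by auto
      ultimately have "card T \<le> card S'" by simp
      hence "ex F lt T \<le> ex F lt S'" unfolding ex_def by simp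
      moreover have "ex F lt S' \<le> x" using S' unfolding E_def by auto
      ultimately show False using exT by simp
    qed
    thus ?thesis unfolding hat_x_def using vh by blast
  qed
  thus ?thesis using SE notin by blast
qed

lemma lower_bound:
  assumes T: "T \<in> F" and exT: "ex F lt T = Suc x"
  shows "card (hat F lt T) \<le> (\<Sum>p\<in>{(S,v). S \<in> F \<and> v \<in> hat F lt S \<and> is_witness F lt S v T}. (2::nat) ^ (Suc x - ex F lt (fst p)))"
proof -
  define Q where "Q = {(S,v). S \<in> F \<and> v \<in> hat F lt S \<and> is_witness F lt S v T}"
  define w where "w = (\<lambda>p::'a set \<times> 'a. (2::nat) ^ (Suc x - ex F lt (fst p)))"
  define Vs where "Vs = Vis V F lt T"
  have finVs: "finite Vs" unfolding Vs_def Vis_def using finV by simp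
  have Tne: "T \<noteq> sm F lt" using exT unfolding ex_def by auto
  obtain v0 where v0: "v0 \<in> Vs" "v0 \<notin> T" using DVS[OF T Tne] unfolding Vs_def by blast
  obtain S0 where S0: "S0 \<in> Pred F lt T" "v0 \<in> S0" using v0 unfolding Vs_def Vis_def by blast
  have S0F: "S0 \<in> F" and S0T: "lt S0 T" using S0 unfolding Pred_def by auto
  obtain S1 where S1: "S1 = S0 \<or> lt S1 S0" "S1 \<in> F" "v0 \<in> hat F lt S1" "is_witness F lt S1 v0 T"
    using vis_pair[OF T _ v0(2) S0] v0(1) unfolding Vs_def by blast
  have finQ: "finite Q"
  proof -
    have "Q \<subseteq> F \<times> V" unfolding Q_def hat_def using subV by auto
    thus ?thesis using finF finV finite_subset by blast
  qed
  define R where "R = {p\<in>Q. snd p \<in> Vs - T}"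
  have finR: "finite R" using finQ unfolding R_def by simp
  have RQ: "R \<subseteq> Q" unfolding R_def by auto
  have "Vs - T \<subseteq> snd ` R"
  proof
    fix v assume v: "v \<in> Vs - T"
    then obtain S' where S': "S' \<in> Pred F lt T" "v \<in> S'" unfolding Vs_def Vis_def by blast
    obtain S where "S \<in> F" "v \<in> hat F lt S" "is_witness F lt S v T"
      using vis_pair[OF T _ _ S'] v unfolding Vs_def by blast
    hence "(S,v) \<in> R" using v unfolding R_def Q_def by auto
    thus "v \<in> snd ` R" by force
  qed
  hence cR: "card (Vs - T) \<le> card R" using finR by (meson card_image_le card_mono finite_imageI le_trans)
  have p0: "(S1,v0) \<in> R" using S1 v0 unfolding R_def Q_def by auto
  have "card S1 \<le> card S0" using S1 SM[OF S1(2) S0F] by auto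
  have cS0T: "card S0 < card T" using SM[OF S0F T S0T] .
  have "card (sm F lt) \<le> card S1" using card_sm[OF S1(2)] .
  define k where "k = card T - card S0"
  have kle: "k \<le> Suc x - ex F lt S1"
    using exT \<open>card S1 \<le> card S0\<close> cS0T \<open>card (sm F lt) \<le> card S1\<close> unfolding k_def ex_def by linarith
  have "k < 2 ^ k" by (rule less_exp)
  also have "\<dots> \<le> w (S1,v0)" unfolding w_def using kle by (simp add: power_increasing)
  finally have wp0: "k + 1 \<le> w (S1,v0)" by simp
  have sumR: "sum w R = w (S1,v0) + sum w (R - {(S1,v0)})"
    using finR p0 by (simp add: sum.remove)
  have "card (R - {(S1,v0)}) \<le> sum w (R - {(S1,v0)})"
  proof -
    have "card (R - {(S1,v0)}) = (\<Sum>p\<in>R - {(S1,v0)}. 1)" by simp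
    also have "\<dots> \<le> sum w (R - {(S1,v0)})" by (rule sum_mono) (simp add: w_def)
    finally show ?thesis .
  qed
  moreover have "card (R - {(S1,v0)}) = card R - 1" using p0 finR by simp
  moreover have "card R \<ge> 1" using p0 finR by (metis One_nat_def Suc_leI card_gt_0_iff empty_iff)
  ultimately have sR: "k + card R \<le> sum w R" using sumR wp0 by linarith
  have "sum w R \<le> sum w Q" using RQ finQ by (simp add: sum_mono2)
  have disj: "hat F lt T \<inter> Vs = {}"
  proof -
    have "v \<notin> hat F lt T" if vVs: "v \<in> Vs" for v
    proof -
      obtain S' where "S' \<in> Pred F lt T" "v \<in> S'" using vVs unfolding Vs_def Vis_def by blast
      thus ?thesis unfolding hat_def Pred_def by blast
    qed
    thus ?thesis by blast
  qed
  have finT: "finite T" using finS[OF T] .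
  have "hat F lt T \<union> (Vs \<inter> T) \<subseteq> T" unfolding hat_def by auto
  hence "card (hat F lt T \<union> (Vs \<inter> T)) \<le> card T" using finT card_mono by blast
  moreover have "card (hat F lt T \<union> (Vs \<inter> T)) = card (hat F lt T) + card (Vs \<inter> T)"
    using disj finT by (subst card_Un_disjoint) (auto simp: hat_def intro: finite_subset)
  ultimately have c1: "card (hat F lt T) + card (Vs \<inter> T) \<le> card T" by simp
  have c2: "card Vs = card (Vs \<inter> T) + card (Vs - T)"
  proof -
    have "Vs = (Vs \<inter> T) \<union> (Vs - T)" by blast
    hence "card Vs = card ((Vs \<inter> T) \<union> (Vs - T))" by simp
    also have "\<dots> = card (Vs \<inter> T) + card (Vs - T)"
      using finVs by (intro card_Un_disjoint) auto
    finally show ?thesis .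
  qed
  have c3: "card S0 \<le> card Vs" using LVS[OF T S0(1)] unfolding Vs_def .
  have "card (hat F lt T) \<le> k + card (Vs - T)" using c1 c2 c3 cS0T unfolding k_def by linarith
  also have "\<dots> \<le> sum w Q" using cR sR \<open>sum w R \<le> sum w Q\<close> by linarith
  finally show ?thesis unfolding w_def Q_def .
qed

lemma step: "M F lt (Suc x) \<le> 2 * M F lt x"
proof -
  define w where "w = (\<lambda>S. (2::nat) ^ (Suc x - ex F lt S))"
  define Ex where "Ex = E F lt x"
  define N where "N = {T\<in>F. ex F lt T = Suc x}"
  define D where "D = (\<lambda>S. hat_x F lt x S - hat_x F lt (Suc x) S)"
  define Q where "Q = (\<lambda>T. {(S,v). S \<in> F \<and> v \<in> hat F lt S \<and> is_witness F lt S v T})"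
  have finEx: "finite Ex" unfolding Ex_def E_def using finF by simp
  have finN: "finite N" unfolding N_def using finF by simp
  have ES: "E F lt (Suc x) = Ex \<union> N" unfolding Ex_def N_def E_def by auto
  have dEN: "Ex \<inter> N = {}" unfolding Ex_def N_def E_def by auto
  have hx_fin: "finite (hat_x F lt y S)" if "S \<in> F" for y S
    using finS[OF that] by (rule finite_subset[rotated]) (auto simp: hat_x_def hat_def)
  have hx_sub: "hat_x F lt (Suc x) S \<subseteq> hat_x F lt x S" for S
    unfolding hat_x_def E_def by auto
  have ExF: "S \<in> F" if "S \<in> Ex" for S using that unfolding Ex_def E_def by auto
  have NF: "S \<in> F" if "S \<in> N" for S using that unfolding N_def by auto
  have finD: "finite (D S)" if "S \<in> Ex" for S unfolding D_def using hx_fin[OF ExF[OF that]] by simp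
  have M1: "M F lt (Suc x) = (\<Sum>S\<in>Ex. w S * card (hat_x F lt (Suc x) S)) + (\<Sum>S\<in>N. card (hat_x F lt (Suc x) S))"
  proof -
    have "M F lt (Suc x) = (\<Sum>S\<in>Ex. w S * card (hat_x F lt (Suc x) S)) + (\<Sum>S\<in>N. w S * card (hat_x F lt (Suc x) S))"
      unfolding M_def ES w_def using finEx finN dEN by (simp add: sum.union_disjoint)
    moreover have "(\<Sum>S\<in>N. w S * card (hat_x F lt (Suc x) S)) = (\<Sum>S\<in>N. card (hat_x F lt (Suc x) S))"
      by (rule sum.cong) (auto simp: w_def N_def)
    ultimately show ?thesis by simp
  qed
  have M2: "2 * M F lt x = (\<Sum>S\<in>Ex. w S * card (hat_x F lt (Suc x) S)) + (\<Sum>S\<in>Ex. w S * card (D S))"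
  proof -
    have "2 * M F lt x = (\<Sum>S\<in>Ex. w S * card (hat_x F lt x S))"
      unfolding M_def sum_distrib_left Ex_def
    proof (rule sum.cong)
      fix S assume "S \<in> E F lt x"
      hence "ex F lt S \<le> x" unfolding E_def by auto
      hence "Suc x - ex F lt S = Suc (x - ex F lt S)" by simp
      thus "2 * (2 ^ (x - ex F lt S) * card (hat_x F lt x S)) = w S * card (hat_x F lt x S)"
        unfolding w_def by simp
    qed simp
    also have "\<dots> = (\<Sum>S\<in>Ex. w S * card (hat_x F lt (Suc x) S) + w S * card (D S))"
    proof (rule sum.cong)
      fix S assume S: "S \<in> Ex"
      have "card (D S) = card (hat_x F lt x S) - card (hat_x F lt (Suc x) S)"
        unfolding D_def using hx_sub hx_fin[OF ExF[OF S]] by (simp add: card_Diff_subset finite_subset)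
      moreover have "card (hat_x F lt (Suc x) S) \<le> card (hat_x F lt x S)"
        using hx_sub hx_fin[OF ExF[OF S]] by (simp add: card_mono)
      ultimately have "card (hat_x F lt x S) = card (hat_x F lt (Suc x) S) + card (D S)" by simp
      thus "w S * card (hat_x F lt x S) = w S * card (hat_x F lt (Suc x) S) + w S * card (D S)"
        by (simp add: algebra_simps)
    qed simp
    finally show ?thesis by (simp add: sum.distrib)
  qed
  have key: "(\<Sum>S\<in>N. card (hat_x F lt (Suc x) S)) \<le> (\<Sum>S\<in>Ex. w S * card (D S))"
  proof -
    have finQ: "finite (Q T)" if "T \<in> N" for T
    proof -
      have "Q T \<subseteq> F \<times> V" unfolding Q_def hat_def using subV by auto
      thus ?thesis using finF finV finite_subset by blast
    qed
    have "(\<Sum>S\<in>N. card (hat_x F lt (Suc x) S)) \<le> (\<Sum>T\<in>N. card (hat F lt T))"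
    proof (rule sum_mono)
      fix T assume T: "T \<in> N"
      have "finite (hat F lt T)" using finS[OF NF[OF T]] unfolding hat_def by simp
      moreover have "hat_x F lt (Suc x) T \<subseteq> hat F lt T" unfolding hat_x_def by blast
      ultimately show "card (hat_x F lt (Suc x) T) \<le> card (hat F lt T)" by (rule card_mono)
    qed
    also have "\<dots> \<le> (\<Sum>T\<in>N. sum (\<lambda>p. w (fst p)) (Q T))"
    proof (rule sum_mono)
      fix T assume T: "T \<in> N"
      hence "T \<in> F" "ex F lt T = Suc x" unfolding N_def by auto
      from lower_bound[OF this] show "card (hat F lt T) \<le> sum (\<lambda>p. w (fst p)) (Q T)"
        unfolding Q_def w_def .
    qed
    also have "\<dots> = sum (\<lambda>p. w (fst p)) (\<Union>(Q ` N))"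
    proof (rule sum.UNION_disjoint[symmetric])
      show "\<forall>i\<in>N. \<forall>j\<in>N. i \<noteq> j \<longrightarrow> Q i \<inter> Q j = {}"
      proof (intro ballI impI)
        fix i j assume "i \<in> N" "j \<in> N" "i \<noteq> j"
        show "Q i \<inter> Q j = {}"
        proof (rule ccontr)
          assume "Q i \<inter> Q j \<noteq> {}"
          then obtain S v where "(S,v) \<in> Q i" "(S,v) \<in> Q j" by auto
          hence "S \<in> F" "v \<in> S" "is_witness F lt S v i" "is_witness F lt S v j"
            unfolding Q_def hat_def by auto
          thus False using SW \<open>i \<noteq> j\<close> by blast
        qed
      qed
    qed (use finN finQ in auto)
    also have "\<dots> \<le> sum (\<lambda>p. w (fst p)) (Sigma Ex D)"
    proof (rule sum_mono2)
      show "finite (Sigma Ex D)" using finEx finD by auto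
      show "\<Union>(Q ` N) \<subseteq> Sigma Ex D"
      proof
        fix p assume "p \<in> \<Union>(Q ` N)"
        then obtain T S v where T: "T \<in> N" and p: "p = (S,v)" "(S,v) \<in> Q T" by (auto simp: Q_def)
        have "S \<in> E F lt x \<and> v \<in> hat_x F lt x S \<and> v \<notin> hat_x F lt (Suc x) S"
          using Q_sub[of T x S v] T p unfolding N_def Q_def by auto
        thus "p \<in> Sigma Ex D" unfolding p Ex_def D_def by auto
      qed
    qed simp
    also have "\<dots> = (\<Sum>S\<in>Ex. \<Sum>v\<in>D S. w S)"
      using sum.Sigma[of Ex D "\<lambda>S v. w S"] finEx finD by (simp add: case_prod_beta)
    also have "\<dots> = (\<Sum>S\<in>Ex. w S * card (D S))" by (simp add: mult.commute)
    finally show ?thesis .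
  qed
  show ?thesis using M1 M2 key by linarith
qed

lemma main: "M F lt x \<le> 2 ^ x * card (sm F lt)"
proof (induction x)
  case 0 thus ?case using M0 by simp
next
  case (Suc x) thus ?case using step[of x] by simp
qed

end

theorem theorem2:
  fixes V :: "'a set" and F :: "'a set set" and lt :: "'a set \<Rightarrow> 'a set \<Rightarrow> bool" and x :: nat
  assumes "IS_family V F lt"
  shows "M F lt x \<le> 2 ^ x * card (sm F lt)"
  using main[OF assms] .

end
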